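(* Let $(X,Y,Z)$ and $(X',Y',Z')$ be triples of random variables on finite alphabets such that $(X,Y,Z)$ is independent of $(X',Y',Z')$. Then $$\operatorname{Un}((X,X')\to(Z,Z')\mid(Y,Y'))=\operatorname{Un}(X\to Z\mid Y)+\operatorname{Un}(X'\to Z'\mid Y'),$$ where $\operatorname{Un}$ is the unique information defined below.
   Context: For random variables $U,V,W$ on finite alphabets $\mathcal{U},\mathcal{V},\mathcal{W}$ and each $v\in\mathcal{V}$ with $\Pr(V=v)>0$, let $(A_v,B_v,C_v)$ be the random triple on $\mathcal{U}\times\mathcal{V}\times\mathcal{W}$ with $\Pr(A_v=u,B_v=v',C_v=w)=0$ if $\Pr(W=w)=0$ and $\Pr(A_v=u,B_v=v',C_v=w)=\Pr(U=u,V=v',W=w)\Pr(W=w\mid V=v)/\Pr(W=w)$ otherwise. The unique information is $\operatorname{Un}(U\to W\mid V)=\sum_{v:\Pr(V=v)>0}\Pr(V=v)\,I(A_v;C_v)$, where $I$ is mutual information. Pairs such as $(X,X')$ are regarded as single random variables on product alphabets. *)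

theory Defs
  imports "HOL-Probability.Probability"
begin

definition joint3 :: "'o measure \<Rightarrow> ('o \<Rightarrow> 'u) \<Rightarrow> ('o \<Rightarrow> 'v) \<Rightarrow> ('o \<Rightarrow> 'w)
    \<Rightarrow> 'u \<times> 'v \<times> 'w \<Rightarrow> real" where
  "joint3 M U V W = (\<lambda>(u, v, w). measure M {\<omega> \<in> space M. U \<omega> = u \<and> V \<omega> = v \<and> W \<omega> = w})"

definition mutual_info_pmf :: "('a::finite \<times> 'b::finite \<Rightarrow> real) \<Rightarrow> real" where
  "mutual_info_pmf p =
     (let pa = (\<lambda>a. \<Sum>b\<in>UNIV. p (a, b)); pb = (\<lambda>b. \<Sum>a\<in>UNIV. p (a, b)) in
      \<Sum>ab\<in>{ab. p ab > 0}. p ab * log 2 (p ab / (pa (fst ab) * pb (snd ab))))"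

text \<open>The distribution of the triple (A_v, B_v, C_v), given the joint pmf P of (U,V,W).\<close>
definition Un_triple :: "('u::finite \<times> 'v::finite \<times> 'w::finite \<Rightarrow> real) \<Rightarrow> 'v
    \<Rightarrow> 'u \<times> 'v \<times> 'w \<Rightarrow> real" where
  "Un_triple P v = (\<lambda>(u, v', w).
     (let PW = (\<lambda>w. \<Sum>u\<in>UNIV. \<Sum>v\<in>UNIV. P (u, v, w));
          PV = (\<lambda>v. \<Sum>u\<in>UNIV. \<Sum>w\<in>UNIV. P (u, v, w));
          PWgV = (\<lambda>w. (\<Sum>u\<in>UNIV. P (u, v, w)) / PV v) in
      if PW w = 0 then 0 else P (u, v', w) * PWgV w / PW w))"

definition unique_info_pmf :: "('u::finite \<times> 'v::finite \<times> 'w::finite \<Rightarrow> real) \<Rightarrow> real" where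
  "unique_info_pmf P =
     (let PV = (\<lambda>v. \<Sum>u\<in>UNIV. \<Sum>w\<in>UNIV. P (u, v, w)) in
      \<Sum>v\<in>{v. PV v > 0}. PV v *
        mutual_info_pmf (\<lambda>(u, w). \<Sum>v'\<in>UNIV. Un_triple P v (u, v', w)))"

text \<open>Un(U -> W | V) for random variables U, V, W on a probability space M.\<close>
definition unique_info :: "'o measure \<Rightarrow> ('o \<Rightarrow> 'u::finite) \<Rightarrow> ('o \<Rightarrow> 'v::finite)
    \<Rightarrow> ('o \<Rightarrow> 'w::finite) \<Rightarrow> real" where
  "unique_info M U V W = unique_info_pmf (joint3 M U V W)"

end

theory Submission
  imports Defs
begin

lemma sum_pair_UNIV:
  fixes h :: "'a::finite \<times> 'b::finite \<Rightarrow> 'c::comm_monoid_add"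
  shows "(\<Sum>x\<in>UNIV. h x) = (\<Sum>a\<in>UNIV. \<Sum>b\<in>UNIV. h (a,b))"
proof -
  have "(\<Sum>a\<in>UNIV. \<Sum>b\<in>UNIV. h (a,b)) = (\<Sum>(a,b)\<in>UNIV \<times> UNIV. h (a,b))"
    by (rule sum.cartesian_product)
  then show ?thesis by simp
qed

lemma sum_prod_UNIV:
  fixes f :: "'a::finite \<Rightarrow> real" and g :: "'b::finite \<Rightarrow> real"
  shows "(\<Sum>x\<in>UNIV. f (fst x) * g (snd x)) = (\<Sum>a\<in>UNIV. f a) * (\<Sum>b\<in>UNIV. g b)"
  unfolding sum_pair_UNIV[of "\<lambda>x. f (fst x) * g (snd x)"] fst_conv snd_conv sum_product ..

lemma sum_shuffle:
  fixes g :: "('a::finite \<times> 'c::finite) \<times> ('b::finite \<times> 'd::finite) \<Rightarrow> real"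
  shows "(\<Sum>x\<in>UNIV. g x) = (\<Sum>y\<in>UNIV. g ((fst (fst y), fst (snd y)), (snd (fst y), snd (snd y))))"
  by (rule sum.reindex_bij_witness[of _ "\<lambda>y. ((fst (fst y), fst (snd y)), (snd (fst y), snd (snd y)))"
        "\<lambda>x. ((fst (fst x), fst (snd x)), (snd (fst x), snd (snd x)))"]) auto

lemma mi_alt:
  "mutual_info_pmf p = (\<Sum>ab\<in>UNIV. if p ab > 0 then p ab * log 2 (p ab /
      ((\<Sum>b\<in>UNIV. p (fst ab, b)) * (\<Sum>a\<in>UNIV. p (a, snd ab)))) else 0)"
  unfolding mutual_info_pmf_def Let_def
  by (subst sum.inter_filter[symmetric]) auto

lemma mi_prod:
  fixes q1 :: "'a::finite \<times> 'b::finite \<Rightarrow> real" and q2 :: "'c::finite \<times> 'd::finite \<Rightarrow> real"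
  assumes n1: "\<And>x. q1 x \<ge> 0" and n2: "\<And>x. q2 x \<ge> 0"
    and s1: "sum q1 UNIV = 1" and s2: "sum q2 UNIV = 1"
  shows "mutual_info_pmf (\<lambda>((a,c),(b,d)). q1 (a,b) * q2 (c,d)) = mutual_info_pmf q1 + mutual_info_pmf q2"
proof -
  define pa1 where "pa1 = (\<lambda>a. \<Sum>b\<in>UNIV. q1 (a, b))"
  define pb1 where "pb1 = (\<lambda>b. \<Sum>a\<in>UNIV. q1 (a, b))"
  define pa2 where "pa2 = (\<lambda>a. \<Sum>b\<in>UNIV. q2 (a, b))"
  define pb2 where "pb2 = (\<lambda>b. \<Sum>a\<in>UNIV. q2 (a, b))"
  define f1 where "f1 = (\<lambda>ab. if q1 ab > 0 then q1 ab * log 2 (q1 ab / (pa1 (fst ab) * pb1 (snd ab))) else 0)"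
  define f2 where "f2 = (\<lambda>ab. if q2 ab > 0 then q2 ab * log 2 (q2 ab / (pa2 (fst ab) * pb2 (snd ab))) else 0)"
  define p where "p = (\<lambda>((a,c),(b,d)). q1 (a,b) * q2 (c,d))"
  have m1: "mutual_info_pmf q1 = sum f1 UNIV" unfolding mi_alt f1_def pa1_def pb1_def by simp
  have m2: "mutual_info_pmf q2 = sum f2 UNIV" unfolding mi_alt f2_def pa2_def pb2_def by simp
  have pa: "(\<Sum>y\<in>UNIV. p ((a,c), y)) = pa1 a * pa2 c" for a c
    unfolding p_def pa1_def pa2_def by (simp add: sum_pair_UNIV sum_product)
  have pb: "(\<Sum>y\<in>UNIV. p (y, (b,d))) = pb1 b * pb2 d" for b d
    unfolding p_def pb1_def pb2_def by (simp add: sum_pair_UNIV sum_product)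
  have pa1pos: "q1 (a,b) > 0 \<Longrightarrow> pa1 a > 0" for a b
    unfolding pa1_def using member_le_sum[of b UNIV "\<lambda>b. q1 (a,b)"] n1 by force
  have pb1pos: "q1 (a,b) > 0 \<Longrightarrow> pb1 b > 0" for a b
    unfolding pb1_def using member_le_sum[of a UNIV "\<lambda>a. q1 (a,b)"] n1 by force
  have pa2pos: "q2 (a,b) > 0 \<Longrightarrow> pa2 a > 0" for a b
    unfolding pa2_def using member_le_sum[of b UNIV "\<lambda>b. q2 (a,b)"] n2 by force
  have pb2pos: "q2 (a,b) > 0 \<Longrightarrow> pb2 b > 0" for a b
    unfolding pb2_def using member_le_sum[of a UNIV "\<lambda>a. q2 (a,b)"] n2 by force
  have trm: "(if p ((a,c),(b,d)) > 0 then p ((a,c),(b,d)) * log 2 (p ((a,c),(b,d)) /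
      ((\<Sum>y\<in>UNIV. p ((a,c), y)) * (\<Sum>y\<in>UNIV. p (y, (b,d))))) else 0)
     = f1 (a,b) * q2 (c,d) + q1 (a,b) * f2 (c,d)" for a b c d
  proof (cases "q1 (a,b) > 0 \<and> q2 (c,d) > 0")
    case True
    then have pos: "pa1 a > 0" "pb1 b > 0" "pa2 c > 0" "pb2 d > 0"
      using pa1pos pb1pos pa2pos pb2pos by auto
    have "q1 (a,b) * q2 (c,d) / (pa1 a * pa2 c * (pb1 b * pb2 d))
        = (q1 (a,b) / (pa1 a * pb1 b)) * (q2 (c,d) / (pa2 c * pb2 d))" by (simp add: field_simps)
    then have "log 2 (q1 (a,b) * q2 (c,d) / (pa1 a * pa2 c * (pb1 b * pb2 d)))
        = log 2 (q1 (a,b) / (pa1 a * pb1 b)) + log 2 (q2 (c,d) / (pa2 c * pb2 d))"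
      using True pos by (simp only:) (rule log_mult_pos, simp_all)
    then show ?thesis using True unfolding pa pb by (simp add: p_def f1_def f2_def algebra_simps)
  next
    case False
    then have "q1 (a,b) = 0 \<or> q2 (c,d) = 0" using n1[of "(a,b)"] n2[of "(c,d)"] by auto
    then show ?thesis unfolding p_def f1_def f2_def by auto
  qed
  have "mutual_info_pmf p = (\<Sum>x\<in>UNIV. f1 (fst x) * q2 (snd x) + q1 (fst x) * f2 (snd x))"
    unfolding mi_alt
    apply (subst sum_shuffle)
    apply (rule sum.cong[OF refl])
    subgoal for x
    proof -
      obtain a b c d where x: "x = ((a,b),(c,d))" by (metis prod.collapse)
      show ?thesis unfolding x fst_conv snd_conv by (rule trm)
    qed
    done
  also have "\<dots> = (\<Sum>x\<in>UNIV. f1 (fst x) * q2 (snd x)) + (\<Sum>x\<in>UNIV. q1 (fst x) * f2 (snd x))"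
    by (rule sum.distrib)
  also have "\<dots> = sum f1 UNIV * sum q2 UNIV + sum q1 UNIV * sum f2 UNIV"
    unfolding sum_prod_UNIV[of f1 q2] sum_prod_UNIV[of q1 f2] ..
  also have "\<dots> = sum f1 UNIV + sum f2 UNIV"
    by (simp only: s1 s2 mult_1_left mult_1_right)
  finally have "mutual_info_pmf p = sum f1 UNIV + sum f2 UNIV" .
  then show ?thesis unfolding p_def[symmetric] m1 m2 .
qed

definition PVd :: "('u::finite \<times> 'v::finite \<times> 'w::finite \<Rightarrow> real) \<Rightarrow> 'v \<Rightarrow> real" where
  "PVd P v = (\<Sum>u\<in>UNIV. \<Sum>w\<in>UNIV. P (u, v, w))"
definition PWd :: "('u::finite \<times> 'v::finite \<times> 'w::finite \<Rightarrow> real) \<Rightarrow> 'w \<Rightarrow> real" where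
  "PWd P w = (\<Sum>u\<in>UNIV. \<Sum>v\<in>UNIV. P (u, v, w))"
definition Sd :: "('u::finite \<times> 'v::finite \<times> 'w::finite \<Rightarrow> real) \<Rightarrow> 'v \<Rightarrow> 'w \<Rightarrow> real" where
  "Sd P v w = (\<Sum>u\<in>UNIV. P (u, v, w))"
definition Qd :: "('u::finite \<times> 'v::finite \<times> 'w::finite \<Rightarrow> real) \<Rightarrow> 'v \<Rightarrow> 'u \<times> 'w \<Rightarrow> real" where
  "Qd P v = (\<lambda>(u, w). \<Sum>v'\<in>UNIV. Un_triple P v (u, v', w))"

lemma Un_triple_alt:
  "Un_triple P v (u, v', w) = (if PWd P w = 0 then 0 else P (u, v', w) * (Sd P v w / PVd P v) / PWd P w)"
  unfolding Un_triple_def Let_def PWd_def PVd_def Sd_def by simp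

lemma unique_info_pmf_alt:
  "unique_info_pmf P = (\<Sum>v\<in>{v. PVd P v > 0}. PVd P v * mutual_info_pmf (Qd P v))"
  unfolding unique_info_pmf_def Let_def PVd_def Qd_def ..

context
  fixes P1 :: "'a::finite \<times> 'b::finite \<times> 'c::finite \<Rightarrow> real"
    and P2 :: "'d::finite \<times> 'e::finite \<times> 'f::finite \<Rightarrow> real"
begin

definition PP :: "('a \<times> 'd) \<times> ('b \<times> 'e) \<times> ('c \<times> 'f) \<Rightarrow> real" where
  "PP = (\<lambda>((u,u'),(v,v'),(w,w')). P1 (u,v,w) * P2 (u',v',w'))"

lemma PV_prod: "PVd PP (v,v') = PVd P1 v * PVd P2 v'"
  unfolding PVd_def PP_def by (simp add: sum_pair_UNIV sum_product)
lemma PW_prod: "PWd PP (w,w') = PWd P1 w * PWd P2 w'"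
  unfolding PWd_def PP_def by (simp add: sum_pair_UNIV sum_product)
lemma S_prod: "Sd PP (v,v') (w,w') = Sd P1 v w * Sd P2 v' w'"
  unfolding Sd_def PP_def by (simp add: sum_pair_UNIV sum_product)

lemma UT_prod:
  "Un_triple PP (v,v') ((u,u'),(v1,v1'),(w,w')) = Un_triple P1 v (u,v1,w) * Un_triple P2 v' (u',v1',w')"
  unfolding Un_triple_alt PV_prod PW_prod S_prod by (simp add: PP_def mult_ac)

lemma Q_prod: "Qd PP (v,v') ((u,u'),(w,w')) = Qd P1 v (u,w) * Qd P2 v' (u',w')"
  unfolding Qd_def by (simp add: UT_prod sum_pair_UNIV sum_product)

end

lemma Q_nonneg:
  assumes "\<And>x. P x \<ge> 0" shows "Qd P v x \<ge> 0"
proof -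
  have "PWd P w \<ge> 0" "PVd P v \<ge> 0" "Sd P v w \<ge> 0" for w
    unfolding PWd_def PVd_def Sd_def using assms by (auto intro!: sum_nonneg)
  then show ?thesis unfolding Qd_def Un_triple_alt using assms
    by (auto simp: case_prod_beta intro!: sum_nonneg)
qed

lemma Q_sum:
  assumes n: "\<And>x. P x \<ge> 0" and s: "sum P UNIV = 1" and pos: "PVd P v > 0"
  shows "sum (Qd P v) UNIV = 1"
proof -
  have S0: "Sd P v w = 0" if "PWd P w = 0" for w
  proof -
    have "Sd P v w \<le> PWd P w" unfolding Sd_def PWd_def
      apply (rule sum_mono)
      subgoal for u using member_le_sum[of v UNIV "\<lambda>v. P (u, v, w)"] n by auto
      done
    moreover have "Sd P v w \<ge> 0" unfolding Sd_def using n by (auto intro!: sum_nonneg)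
    ultimately show ?thesis using that by linarith
  qed
  have "sum (Qd P v) UNIV = (\<Sum>w\<in>UNIV. \<Sum>u\<in>UNIV. \<Sum>v'\<in>UNIV. Un_triple P v (u, v', w))"
    unfolding Qd_def sum_pair_UNIV prod.case by (rule sum.swap)
  also have "\<dots> = (\<Sum>w\<in>UNIV. Sd P v w / PVd P v)"
  proof (rule sum.cong[OF refl])
    fix w
    show "(\<Sum>u\<in>UNIV. \<Sum>v'\<in>UNIV. Un_triple P v (u, v', w)) = Sd P v w / PVd P v"
    proof (cases "PWd P w = 0")
      case True then show ?thesis unfolding Un_triple_alt using S0 by simp
    next
      case False
      have "(\<Sum>u\<in>UNIV. \<Sum>v'\<in>UNIV. Un_triple P v (u, v', w))
          = (\<Sum>u\<in>UNIV. \<Sum>v'\<in>UNIV. P (u, v', w)) * (Sd P v w / PVd P v) / PWd P w"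
        unfolding Un_triple_alt using False by (simp add: sum_divide_distrib sum_distrib_right)
      also have "\<dots> = Sd P v w / PVd P v" using False unfolding PWd_def by simp
      finally show ?thesis .
    qed
  qed
  also have "\<dots> = (\<Sum>w\<in>UNIV. Sd P v w) / PVd P v" by (simp add: sum_divide_distrib)
  also have "(\<Sum>w\<in>UNIV. Sd P v w) = PVd P v" unfolding Sd_def PVd_def by (rule sum.swap)
  finally show ?thesis using pos by simp
qed


lemma PV_nonneg: "(\<And>x. P x \<ge> 0) \<Longrightarrow> PVd P v \<ge> 0"
  unfolding PVd_def by (auto intro!: sum_nonneg)

lemma PV_total:
  assumes n: "\<And>x. P x \<ge> 0"
  shows "(\<Sum>v\<in>{v. PVd P v > 0}. PVd P v) = sum P UNIV"
proof -
  have "(\<Sum>v\<in>{v. PVd P v > 0}. PVd P v) = (\<Sum>v\<in>UNIV. PVd P v)"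
  proof (rule sum.mono_neutral_left)
    show "\<forall>i\<in>UNIV - {v. 0 < PVd P v}. PVd P i = 0"
      using PV_nonneg[of P] n by (auto simp: order.order_iff_strict)
  qed auto
  also have "\<dots> = sum P UNIV"
    unfolding PVd_def sum_pair_UNIV[of P] sum_pair_UNIV[of "\<lambda>x. P (_, x)"] by (rule sum.swap)
  finally show ?thesis .
qed

lemma unique_prod:
  fixes P1 :: "'a::finite \<times> 'b::finite \<times> 'c::finite \<Rightarrow> real"
    and P2 :: "'d::finite \<times> 'e::finite \<times> 'f::finite \<Rightarrow> real"
  assumes n1: "\<And>x. P1 x \<ge> 0" and n2: "\<And>x. P2 x \<ge> 0"
    and s1: "sum P1 UNIV = 1" and s2: "sum P2 UNIV = 1"
  shows "unique_info_pmf (PP P1 P2) = unique_info_pmf P1 + unique_info_pmf P2"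
proof -
  define V1 where "V1 = {v. PVd P1 v > 0}"
  define V2 where "V2 = {v. PVd P2 v > 0}"
  define M1 where "M1 = (\<lambda>v. mutual_info_pmf (Qd P1 v))"
  define M2 where "M2 = (\<lambda>v. mutual_info_pmf (Qd P2 v))"
  have V: "{vv. PVd (PP P1 P2) vv > 0} = V1 \<times> V2"
  proof (safe)
    fix v v' assume "PVd (PP P1 P2) (v, v') > 0"
    then have "PVd P1 v * PVd P2 v' > 0" by (simp add: PV_prod)
    then show "v \<in> V1" "v' \<in> V2" unfolding V1_def V2_def
      using PV_nonneg[of P1 v] PV_nonneg[of P2 v'] n1 n2 by (auto simp: zero_less_mult_iff)
  next
    fix v v' assume "v \<in> V1" "v' \<in> V2"
    then show "PVd (PP P1 P2) (v, v') > 0" unfolding V1_def V2_def by (simp add: PV_prod)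
  qed
  have T: "PVd (PP P1 P2) (v,v') * mutual_info_pmf (Qd (PP P1 P2) (v,v'))
      = PVd P1 v * PVd P2 v' * (M1 v + M2 v')" if "v \<in> V1" "v' \<in> V2" for v v'
  proof -
    have "Qd (PP P1 P2) (v,v') = (\<lambda>((a,c),(b,d)). Qd P1 v (a,b) * Qd P2 v' (c,d))"
      by (auto simp: Q_prod)
    then have "mutual_info_pmf (Qd (PP P1 P2) (v,v')) = M1 v + M2 v'"
      unfolding M1_def M2_def
      using mi_prod[of "Qd P1 v" "Qd P2 v'", OF Q_nonneg Q_nonneg Q_sum Q_sum] n1 n2 s1 s2 that
      unfolding V1_def V2_def by simp
    then show ?thesis by (simp add: PV_prod)
  qed
  have "unique_info_pmf (PP P1 P2) = (\<Sum>(v,v')\<in>V1 \<times> V2. PVd P1 v * PVd P2 v' * (M1 v + M2 v'))"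
    unfolding unique_info_pmf_alt V by (rule sum.cong) (auto simp: T)
  also have "\<dots> = (\<Sum>v\<in>V1. \<Sum>v'\<in>V2. PVd P1 v * PVd P2 v' * (M1 v + M2 v'))"
    by (rule sum.cartesian_product[symmetric])
  also have "\<dots> = (\<Sum>v\<in>V1. PVd P1 v * M1 v * (\<Sum>v'\<in>V2. PVd P2 v')
      + PVd P1 v * (\<Sum>v'\<in>V2. PVd P2 v' * M2 v'))"
    by (rule sum.cong[OF refl]) (simp add: sum_distrib_left sum.distrib algebra_simps)
  also have "\<dots> = (\<Sum>v\<in>V1. PVd P1 v * M1 v) * (\<Sum>v'\<in>V2. PVd P2 v')
      + (\<Sum>v\<in>V1. PVd P1 v) * (\<Sum>v'\<in>V2. PVd P2 v' * M2 v')"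
    by (simp add: sum.distrib sum_distrib_right)
  also have "(\<Sum>v'\<in>V2. PVd P2 v') = 1" unfolding V2_def using PV_total[of P2, OF n2] s2 by simp
  also have "(\<Sum>v\<in>V1. PVd P1 v) = 1" unfolding V1_def using PV_total[of P1, OF n1] s1 by simp
  finally show ?thesis unfolding unique_info_pmf_alt V1_def V2_def M1_def M2_def by simp
qed


lemma joint3_alt: "joint3 M X Y Z = (\<lambda>t. measure M {\<omega> \<in> space M. (X \<omega>, Y \<omega>, Z \<omega>) = t})"
  unfolding joint3_def by (auto simp: fun_eq_iff)

lemma joint3_nonneg: "joint3 M X Y Z x \<ge> 0"
  unfolding joint3_alt by simp

lemma sum_level_sets:
  fixes T :: "'o \<Rightarrow> 't::finite"
  assumes "prob_space M" and meas: "\<And>t. {\<omega> \<in> space M. T \<omega> = t} \<in> sets M"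
  shows "(\<Sum>t\<in>UNIV. measure M {\<omega> \<in> space M. T \<omega> = t}) = 1"
proof -
  interpret prob_space M by fact
  have "measure M (\<Union>t\<in>UNIV. {\<omega> \<in> space M. T \<omega> = t}) = (\<Sum>t\<in>UNIV. measure M {\<omega> \<in> space M. T \<omega> = t})"
    by (rule finite_measure_finite_Union) (auto simp: meas disjoint_family_on_def)
  moreover have "(\<Union>t\<in>UNIV. {\<omega> \<in> space M. T \<omega> = t}) = space M" by auto
  ultimately show ?thesis using prob_space by simp
qed

lemma level_meas:
  assumes "X \<in> measurable M (count_space UNIV)" "Y \<in> measurable M (count_space UNIV)"
    "Z \<in> measurable M (count_space UNIV)"
  shows "{\<omega> \<in> space M. (X \<omega>, Y \<omega>, Z \<omega>) = t} \<in> sets M"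
proof -
  obtain u v w where t: "t = (u,v,w)" by (cases t) auto
  have "{\<omega> \<in> space M. (X \<omega>, Y \<omega>, Z \<omega>) = t} = (X -` {u} \<inter> space M) \<inter> (Y -` {v} \<inter> space M) \<inter> (Z -` {w} \<inter> space M)"
    unfolding t by auto
  also have "\<dots> \<in> sets M" using assms by (intro sets.Int measurable_sets) auto
  finally show ?thesis .
qed

lemma joint3_sum:
  fixes X :: "'o \<Rightarrow> 'a::finite" and Y :: "'o \<Rightarrow> 'b::finite" and Z :: "'o \<Rightarrow> 'c::finite"
  assumes "prob_space M" "X \<in> measurable M (count_space UNIV)" "Y \<in> measurable M (count_space UNIV)"
    "Z \<in> measurable M (count_space UNIV)"
  shows "sum (joint3 M X Y Z) UNIV = 1"
  unfolding joint3_alt by (rule sum_level_sets[OF assms(1)]) (rule level_meas[OF assms(2-4)])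

lemma joint3_indep:
  fixes X :: "'o \<Rightarrow> 'a::finite" and Y :: "'o \<Rightarrow> 'b::finite" and Z :: "'o \<Rightarrow> 'c::finite"
    and X' :: "'o \<Rightarrow> 'd::finite" and Y' :: "'o \<Rightarrow> 'e::finite" and Z' :: "'o \<Rightarrow> 'f::finite"
  assumes "prob_space M"
    and ind: "prob_space.indep_set M
           (sets (vimage_algebra (space M) (\<lambda>\<omega>. (X \<omega>, Y \<omega>, Z \<omega>)) (count_space UNIV)))
           (sets (vimage_algebra (space M) (\<lambda>\<omega>. (X' \<omega>, Y' \<omega>, Z' \<omega>)) (count_space UNIV)))"
  shows "joint3 M (\<lambda>\<omega>. (X \<omega>, X' \<omega>)) (\<lambda>\<omega>. (Y \<omega>, Y' \<omega>)) (\<lambda>\<omega>. (Z \<omega>, Z' \<omega>))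
       = PP (joint3 M X Y Z) (joint3 M X' Y' Z')"
proof (rule ext)
  interpret prob_space M by fact
  fix x :: "('a \<times> 'd) \<times> ('b \<times> 'e) \<times> ('c \<times> 'f)"
  obtain u u' v v' w w' where x: "x = ((u,u'),(v,v'),(w,w'))" by (metis prod.collapse)
  define A where "A = (\<lambda>\<omega>. (X \<omega>, Y \<omega>, Z \<omega>)) -` {(u,v,w)} \<inter> space M"
  define B where "B = (\<lambda>\<omega>. (X' \<omega>, Y' \<omega>, Z' \<omega>)) -` {(u',v',w')} \<inter> space M"
  have A: "A \<in> sets (vimage_algebra (space M) (\<lambda>\<omega>. (X \<omega>, Y \<omega>, Z \<omega>)) (count_space UNIV))"
    unfolding A_def by (subst sets_vimage_algebra2) auto
  have B: "B \<in> sets (vimage_algebra (space M) (\<lambda>\<omega>. (X' \<omega>, Y' \<omega>, Z' \<omega>)) (count_space UNIV))"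
    unfolding B_def by (subst sets_vimage_algebra2) auto
  have "measure M (A \<inter> B) = measure M A * measure M B"
    by (rule indep_setD[OF ind A B])
  moreover have "A \<inter> B = {\<omega> \<in> space M. (X \<omega>, X' \<omega>) = (u,u') \<and> (Y \<omega>, Y' \<omega>) = (v,v') \<and> (Z \<omega>, Z' \<omega>) = (w,w')}"
    unfolding A_def B_def by auto
  moreover have "A = {\<omega> \<in> space M. X \<omega> = u \<and> Y \<omega> = v \<and> Z \<omega> = w}" unfolding A_def by auto
  moreover have "B = {\<omega> \<in> space M. X' \<omega> = u' \<and> Y' \<omega> = v' \<and> Z' \<omega> = w'}" unfolding B_def by auto
  ultimately show "joint3 M (\<lambda>\<omega>. (X \<omega>, X' \<omega>)) (\<lambda>\<omega>. (Y \<omega>, Y' \<omega>)) (\<lambda>\<omega>. (Z \<omega>, Z' \<omega>)) x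
       = PP (joint3 M X Y Z) (joint3 M X' Y' Z') x"
    unfolding x joint3_def PP_def by simp
qed

theorem lemma8:
  fixes M :: "'o measure"
    and X :: "'o \<Rightarrow> 'x::finite" and Y :: "'o \<Rightarrow> 'y::finite" and Z :: "'o \<Rightarrow> 'z::finite"
    and X' :: "'o \<Rightarrow> 'x2::finite" and Y' :: "'o \<Rightarrow> 'y2::finite" and Z' :: "'o \<Rightarrow> 'z2::finite"
  assumes "prob_space M"
    and "X \<in> measurable M (count_space UNIV)" and "Y \<in> measurable M (count_space UNIV)"
    and "Z \<in> measurable M (count_space UNIV)" and "X' \<in> measurable M (count_space UNIV)"
    and "Y' \<in> measurable M (count_space UNIV)" and "Z' \<in> measurable M (count_space UNIV)"
    and "prob_space.indep_set M
           (sets (vimage_algebra (space M) (\<lambda>\<omega>. (X \<omega>, Y \<omega>, Z \<omega>)) (count_space UNIV)))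
           (sets (vimage_algebra (space M) (\<lambda>\<omega>. (X' \<omega>, Y' \<omega>, Z' \<omega>)) (count_space UNIV)))"
  shows "unique_info M (\<lambda>\<omega>. (X \<omega>, X' \<omega>)) (\<lambda>\<omega>. (Y \<omega>, Y' \<omega>)) (\<lambda>\<omega>. (Z \<omega>, Z' \<omega>))
       = unique_info M X Y Z + unique_info M X' Y' Z'"
  unfolding unique_info_def joint3_indep[OF assms(1) assms(8)]
  by (rule unique_prod[OF joint3_nonneg joint3_nonneg joint3_sum[OF assms(1-4)] joint3_sum[OF assms(1) assms(5-7)]])

end
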